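(* Consider the composite problem, the Stochastic Decoupling Method and the gradient-estimator condition described in the context, with $f$ convex and $L$-smooth and $g_1,\dots,g_m,R$ proper closed convex. Take a gradient estimator that satisfies part (a) of the gradient-estimator condition with constants $\eta_0,\omega$ and sequence $\{\mathcal M^t\}$, a stepsize $\eta\le\eta_0$, and an optimum $x^*$ (with $y_1^*,\dots,y_m^*$) satisfying the optimality assumption. Then, with probability $1$, $D_f(x^t,x^* )\to0$ as $t\to\infty$.
   Context: Problem: $\min_{x\in\mathbb{R}^d}f(x)+\frac1m\sum_{j=1}^mg_j(x)+R(x)$ with $f:\mathbb{R}^d\to\mathbb{R}$ differentiable, convex and $L$-smooth ($f(x)\le f(y)+\langle\nabla f(y),x-y\rangle+\frac L2\|x-y\|^2$), minimizer set nonempty. $D_f(x,y):=f(x)-f(y)-\langle\nabla f(y),x-y\rangle$; $\mathrm{prox}_{\eta h}(x):=\arg\min_u\{h(u)+\frac1{2\eta}\|u-x\|^2\}$. Optimality assumption: $x^*$ is a minimizer and there are $y_j^*\in\partial g_j(x^* )$, $r^*\in\partial R(x^* )$ with $\nabla f(x^* )+\frac1m\sum_jy_j^*+r^*=0$. Stochastic Decoupling Method: stepsize $\eta>0$, probabilities $p_j>0$ summing to 1, $\eta_j:=\eta/(mp_j)$; deterministic start $x^0,y_1^0,\dots,y_m^0$, $y^0:=\frac1m\sum_jy_j^0$. For $t=0,1,\dots$: $v^t$ produced by a gradient estimator; $z^t=\mathrm{prox}_{\eta R}(x^t-\eta v^t-\eta y^t)$; draw $j$ with $\Pr(j=k)=p_k$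 independently of the past; $x^{t+1}=\mathrm{prox}_{\eta_jg_j}(z^t+\eta_jy_j^t)$; $y_j^{t+1}=y_j^t+\frac1{\eta_j}(z^t-x^{t+1})$, $y_k^{t+1}=y_k^t$ ($k\ne j$); $y^{t+1}=y^t+\frac1m(y_j^{t+1}-y_j^t)$. Gradient-estimator condition part (a): with $w^t:=x^t-\eta v^t$, $w^*:=x^*-\eta\nabla f(x^* )$, there are $\eta_0>0$, $\omega>0$ and a nonnegative sequence $\{\mathcal M^t\}$ such that for every $\eta\le\eta_0$ and all $t$: $\mathbb{E}\|w^t-w^*\|^2+\mathcal M^{t+1}\le\mathbb{E}\|x^t-x^*\|^2-\omega\eta\mathbb{E}D_f(x^t,x^* )+\mathcal M^t$. *)

theory Defs
  imports "HOL-Probability.Probability"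
begin

definition proper_fun :: "('v::euclidean_space \<Rightarrow> ereal) \<Rightarrow> bool" where
  "proper_fun h \<longleftrightarrow> (\<forall>x. h x \<noteq> -\<infinity>) \<and> (\<exists>x. h x \<noteq> \<infinity>)"

definition epigraph :: "('v::euclidean_space \<Rightarrow> ereal) \<Rightarrow> ('v \<times> real) set" where
  "epigraph h = {(x, r). h x \<le> ereal r}"

definition closed_fun :: "('v::euclidean_space \<Rightarrow> ereal) \<Rightarrow> bool" where
  "closed_fun h \<longleftrightarrow> closed (epigraph h)"

definition convex_fun :: "('v::euclidean_space \<Rightarrow> ereal) \<Rightarrow> bool" where
  "convex_fun h \<longleftrightarrow> convex (epigraph h)"

definition proper_closed_convex :: "('v::euclidean_space \<Rightarrow> ereal) \<Rightarrow> bool" where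
  "proper_closed_convex h \<longleftrightarrow> proper_fun h \<and> closed_fun h \<and> convex_fun h"

definition subdiff :: "('v::euclidean_space \<Rightarrow> ereal) \<Rightarrow> 'v \<Rightarrow> 'v set" where
  "subdiff h x = {s. h x \<noteq> \<infinity> \<and> (\<forall>u. h x + ereal (s \<bullet> (u - x)) \<le> h u)}"

text \<open>\<open>is_prox h \<eta> x u\<close>: \<open>u\<close> is a minimiser of \<open>h(u) + \<parallel>u - x\<parallel>^2/(2\<eta>)\<close>, i.e.
  \<open>u = prox_{\<eta> h}(x)\<close> (the minimiser is unique for proper closed convex h).\<close>
definition is_prox :: "('v::euclidean_space \<Rightarrow> ereal) \<Rightarrow> real \<Rightarrow> 'v \<Rightarrow> 'v \<Rightarrow> bool" where
  "is_prox h \<eta> x u \<longleftrightarrow>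
     (\<forall>w. h u + ereal ((norm (u - x))\<^sup>2 / (2 * \<eta>)) \<le> h w + ereal ((norm (w - x))\<^sup>2 / (2 * \<eta>)))"

definition bregman :: "('v::euclidean_space \<Rightarrow> real) \<Rightarrow> ('v \<Rightarrow> 'v) \<Rightarrow> 'v \<Rightarrow> 'v \<Rightarrow> real" where
  "bregman f gf x y = f x - f y - gf y \<bullet> (x - y)"

definition objective :: "('v::euclidean_space \<Rightarrow> real) \<Rightarrow> nat \<Rightarrow> (nat \<Rightarrow> 'v \<Rightarrow> ereal)
    \<Rightarrow> ('v \<Rightarrow> ereal) \<Rightarrow> 'v \<Rightarrow> ereal" where
  "objective f m g R x = ereal (f x) + (\<Sum>k<m. g k x) / ereal (real m) + R x"

end

theory Submission
  imports Defs
begin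


lemma pos_lin_limit:
  fixes c K :: real
  assumes K: "K \<ge> 0" and H: "\<And>s. 0 < s \<Longrightarrow> s \<le> 1 \<Longrightarrow> 0 \<le> c + s * K"
  shows "0 \<le> c"
proof (rule ccontr)
  assume "\<not> 0 \<le> c"
  hence c: "c < 0" by simp
  define s where "s = (-c) / (K - c)"
  have s0: "0 < s" using c K unfolding s_def by (intro divide_pos_pos) auto
  have Kc: "K - c > 0" using c K by simp
  have s1: "s \<le> 1" unfolding s_def using K by (subst pos_divide_le_eq[OF Kc]) simp
  have "c + s * K = - c * c / (K - c)" using c K by (simp add: s_def field_simps)
  also have "\<dots> < 0" using c K by (simp add: divide_neg_pos mult_neg_neg)
  finally show False using H[OF s0 s1] by simp
qed

lemma prox_subgrad:
  fixes h :: "'v::euclidean_space \<Rightarrow> ereal"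
  assumes prox: "is_prox h \<eta> a u" and pr: "proper_fun h" and cv: "convex_fun h" and eta: "\<eta> > 0"
  shows "(1/\<eta>) *\<^sub>R (a - u) \<in> subdiff h u"
proof -
  obtain w0 where w0: "h w0 \<noteq> \<infinity>" using pr unfolding proper_fun_def by auto
  have P: "\<And>w. h u + ereal ((norm (u - a))\<^sup>2 / (2 * \<eta>)) \<le> h w + ereal ((norm (w - a))\<^sup>2 / (2 * \<eta>))"
    using prox unfolding is_prox_def by auto
  have "h u \<noteq> \<infinity>"
  proof
    assume "h u = \<infinity>"
    with P[of w0] have "h w0 + ereal ((norm (w0 - a))\<^sup>2 / (2 * \<eta>)) = \<infinity>" by simp
    with w0 show False by simp
  qed
  moreover have "h u \<noteq> -\<infinity>" using pr unfolding proper_fun_def by auto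
  ultimately obtain hu where hu: "h u = ereal hu" by (cases "h u") auto
  have "h u + ereal (((1/\<eta>) *\<^sub>R (a - u)) \<bullet> (w - u)) \<le> h w" for w
  proof (cases "h w = \<infinity>")
    case True then show ?thesis by simp
  next
    case False
    moreover have "h w \<noteq> -\<infinity>" using pr unfolding proper_fun_def by auto
    ultimately obtain hw where hw: "h w = ereal hw" by (cases "h w") auto
    define d where "d = u - a"
    define e where "e = w - u"
    have key: "0 \<le> (hw - hu + (d \<bullet> e) / \<eta>) + s * ((norm e)\<^sup>2 / (2 * \<eta>))"
      if s0: "0 < s" and s1: "s \<le> 1" for s
    proof -
      have e1: "(u, hu) \<in> epigraph h" using hu by (simp add: epigraph_def)
      have e2: "(w, hw) \<in> epigraph h" using hw by (simp add: epigraph_def)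
      have "(1 - s) *\<^sub>R (u, hu) + s *\<^sub>R (w, hw) \<in> epigraph h"
        using cv unfolding convex_fun_def
        by (rule convexD) (use e1 e2 s0 s1 in auto)
      hence "h (u + s *\<^sub>R e) \<le> ereal ((1 - s) * hu + s * hw)"
        by (simp add: epigraph_def e_def algebra_simps)
      hence "h u + ereal ((norm (u - a))\<^sup>2 / (2 * \<eta>)) \<le> ereal ((1 - s) * hu + s * hw) + ereal ((norm (u + s *\<^sub>R e - a))\<^sup>2 / (2 * \<eta>))"
        using P[of "u + s *\<^sub>R e"] by (meson add_right_mono order_trans)
      hence R: "hu + (norm d)\<^sup>2 / (2 * \<eta>) \<le> (1 - s) * hu + s * hw + (norm (d + s *\<^sub>R e))\<^sup>2 / (2 * \<eta>)"
        by (simp add: hu d_def algebra_simps)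
      have N: "(norm (d + s *\<^sub>R e))\<^sup>2 = (norm d)\<^sup>2 + 2 * s * (d \<bullet> e) + s\<^sup>2 * (norm e)\<^sup>2"
        unfolding power2_norm_eq_inner by (simp add: inner_add_left inner_add_right inner_commute power2_eq_square algebra_simps)
      have "0 \<le> s * (hw - hu) + (2 * s * (d \<bullet> e) + s\<^sup>2 * (norm e)\<^sup>2) / (2 * \<eta>)"
        using R unfolding N add_divide_distrib by (simp add: algebra_simps)
      also have "\<dots> = s * ((hw - hu + (d \<bullet> e) / \<eta>) + s * ((norm e)\<^sup>2 / (2 * \<eta>)))"
        using eta by (simp add: field_simps power2_eq_square)
      finally show ?thesis using s0 by (simp add: zero_le_mult_iff)
    qed
    have "0 \<le> hw - hu + (d \<bullet> e) / \<eta>"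
      by (rule pos_lin_limit[OF _ key]) (use eta in auto)
    moreover have "d \<bullet> e = - ((a - u) \<bullet> (w - u))"
      by (simp add: d_def e_def inner_diff_left inner_diff_right inner_commute)
    ultimately have "hu + ((1/\<eta>) *\<^sub>R (a - u)) \<bullet> (w - u) \<le> hw"
      by simp
    then show ?thesis by (simp add: hu hw)
  qed
  then show ?thesis unfolding subdiff_def using hu by auto
qed

lemma subdiff_mono:
  fixes h :: "'v::euclidean_space \<Rightarrow> ereal"
  assumes pr: "proper_fun h" and s1: "s1 \<in> subdiff h u1" and s2: "s2 \<in> subdiff h u2"
  shows "0 \<le> (s1 - s2) \<bullet> (u1 - u2)"
proof -
  have f1: "h u1 \<noteq> \<infinity>" "h u2 \<noteq> \<infinity>" using s1 s2 unfolding subdiff_def by auto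
  have f2: "h u1 \<noteq> -\<infinity>" "h u2 \<noteq> -\<infinity>" using pr unfolding proper_fun_def by auto
  obtain a1 where a1: "h u1 = ereal a1" using f1 f2 by (cases "h u1") auto
  obtain a2 where a2: "h u2 = ereal a2" using f1 f2 by (cases "h u2") auto
  have "h u1 + ereal (s1 \<bullet> (u2 - u1)) \<le> h u2" using s1 unfolding subdiff_def by auto
  hence i1: "a1 + s1 \<bullet> (u2 - u1) \<le> a2" by (simp add: a1 a2)
  have "h u2 + ereal (s2 \<bullet> (u1 - u2)) \<le> h u1" using s2 unfolding subdiff_def by auto
  hence i2: "a2 + s2 \<bullet> (u1 - u2) \<le> a1" by (simp add: a1 a2)
  show ?thesis using i1 i2 by (simp add: inner_diff_left inner_diff_right)
qed

lemma vec_ineq1: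
  fixes A b :: "'v::real_inner"
  assumes "0 \<le> b \<bullet> (A - b)"
  shows "(norm (A - b))\<^sup>2 + (norm b)\<^sup>2 \<le> (norm A)\<^sup>2"
  using assms by (simp add: power2_norm_eq_inner inner_diff_left inner_diff_right inner_commute)

lemma vec_ineq2:
  fixes e q d :: "'v::real_inner"
  assumes "0 \<le> (e - q - d) \<bullet> d"
  shows "(norm d)\<^sup>2 + 2 * (d \<bullet> q) \<le> (norm e)\<^sup>2"
proof -
  have "0 \<le> (norm (e - d))\<^sup>2" by simp
  thus ?thesis using assms by (simp add: power2_norm_eq_inner inner_diff_left inner_diff_right inner_commute)
qed

lemma bregman_nonneg:
  fixes f :: "'v::euclidean_space \<Rightarrow> real"
  assumes gr: "\<And>u. (f has_derivative (\<lambda>h. gf u \<bullet> h)) (at u)" and cv: "convex_on UNIV f"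
  shows "0 \<le> bregman f gf u w"
proof -
  define \<phi> where "\<phi> s = f (w + s *\<^sub>R (u - w))" for s :: real
  have "convex_on UNIV \<phi>"
  proof (rule convex_onI)
    fix t :: real and x y :: real
    assume t: "0 < t" "t < 1"
    have "w + ((1 - t) *\<^sub>R x + t *\<^sub>R y) *\<^sub>R (u - w) = (1 - t) *\<^sub>R (w + x *\<^sub>R (u - w)) + t *\<^sub>R (w + y *\<^sub>R (u - w))"
      by (simp add: algebra_simps)
    then show "\<phi> ((1 - t) *\<^sub>R x + t *\<^sub>R y) \<le> (1 - t) * \<phi> x + t * \<phi> y"
      unfolding \<phi>_def using convex_onD[OF cv, of t] t by auto
  qed simp
  moreover have "(\<phi> has_field_derivative (gf w \<bullet> (u - w))) (at 0)"
  proof -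
    have "((\<lambda>s. w + s *\<^sub>R (u - w)) has_derivative (\<lambda>s. s *\<^sub>R (u - w))) (at 0)"
      by (auto intro!: derivative_eq_intros)
    from has_derivative_compose[OF this gr[of "w + 0 *\<^sub>R (u - w)"]]
    have "((\<lambda>s. f (w + s *\<^sub>R (u - w))) has_derivative (\<lambda>s. gf w \<bullet> (s *\<^sub>R (u - w)))) (at 0)"
      by (simp add: o_def)
    hence "(\<phi> has_derivative (\<lambda>s. gf w \<bullet> (s *\<^sub>R (u - w)))) (at 0)"
      unfolding \<phi>_def by simp
    then show ?thesis
      unfolding has_field_derivative_def by (rule has_derivative_eq_rhs) (auto simp: fun_eq_iff)
  qed
  ultimately have "\<phi> 1 - \<phi> 0 \<ge> (gf w \<bullet> (u - w)) * (1 - 0)"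
    by (intro convex_on_imp_above_tangent[where A = UNIV]) auto
  then show ?thesis by (simp add: \<phi>_def bregman_def)
qed



lemma indep_nn:
  fixes G :: "'a \<Rightarrow> ennreal"
  assumes P: "prob_space P" and sub: "subalgebra P F"
    and S: "S \<in> sets P"
    and ind: "\<And>A. A \<in> sets F \<Longrightarrow> measure P (S \<inter> A) = p * measure P A"
    and p: "p \<ge> 0"
    and G: "G \<in> borel_measurable F"
  shows "(\<integral>\<^sup>+\<xi>. indicator S \<xi> * G \<xi> \<partial>P) = ennreal p * (\<integral>\<^sup>+\<xi>. G \<xi> \<partial>P)"
proof -
  interpret prob_space P by (rule P)
  have sp: "space F = space P" using sub by (simp add: subalgebra_def)
  have mP: "u \<in> borel_measurable P" if "u \<in> borel_measurable F" for u :: "'a \<Rightarrow> ennreal"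
    using measurable_from_subalg[OF sub that] .
  have mS: "(\<lambda>\<xi>. indicator S \<xi> * u \<xi>) \<in> borel_measurable P" if "u \<in> borel_measurable P" for u :: "'a \<Rightarrow> ennreal"
    by (rule borel_measurable_times_ennreal[OF borel_measurable_indicator[OF S] that])
  show ?thesis using G
  proof (induction rule: borel_measurable_induct)
    case (cong f g)
    have "(\<integral>\<^sup>+\<xi>. indicator S \<xi> * f \<xi> \<partial>P) = (\<integral>\<^sup>+\<xi>. indicator S \<xi> * g \<xi> \<partial>P)"
      by (rule nn_integral_cong) (simp add: cong.hyps(3) sp)
    moreover have "(\<integral>\<^sup>+\<xi>. f \<xi> \<partial>P) = (\<integral>\<^sup>+\<xi>. g \<xi> \<partial>P)"
      by (rule nn_integral_cong) (simp add: cong.hyps(3) sp)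
    ultimately show ?case using cong.IH by simp
  next
    case (set A)
    have AP: "A \<in> sets P" using sub set by (auto simp: subalgebra_def)
    have "(\<integral>\<^sup>+\<xi>. indicator S \<xi> * indicator A \<xi> \<partial>P) = (\<integral>\<^sup>+\<xi>. indicator (S \<inter> A) \<xi> \<partial>P)"
      by (rule nn_integral_cong) (simp split: split_indicator)
    also have "\<dots> = emeasure P (S \<inter> A)" using S AP by simp
    also have "\<dots> = ennreal (measure P (S \<inter> A))"
      by (rule emeasure_eq_measure)
    also have "\<dots> = ennreal p * ennreal (measure P A)"
      using ind[OF set] p by (simp add: ennreal_mult)
    also have "\<dots> = ennreal p * emeasure P A"
      by (simp add: emeasure_eq_measure)
    finally show ?case using AP by simp
  next
    case (mult u c)
    have um: "u \<in> borel_measurable P" by (rule mP[OF mult.hyps(2)])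
    have "(\<integral>\<^sup>+\<xi>. indicator S \<xi> * (c * u \<xi>) \<partial>P) = (\<integral>\<^sup>+\<xi>. c * (indicator S \<xi> * u \<xi>) \<partial>P)"
      by (simp add: ac_simps)
    also have "\<dots> = c * (\<integral>\<^sup>+\<xi>. indicator S \<xi> * u \<xi> \<partial>P)"
      by (rule nn_integral_cmult[OF mS[OF um]])
    also have "\<dots> = ennreal p * (c * (\<integral>\<^sup>+\<xi>. u \<xi> \<partial>P))"
      unfolding mult.IH by (simp add: ac_simps)
    also have "c * (\<integral>\<^sup>+\<xi>. u \<xi> \<partial>P) = (\<integral>\<^sup>+\<xi>. c * u \<xi> \<partial>P)"
      by (rule nn_integral_cmult[OF um, symmetric])
    finally show ?case .
  next
    case (add u v)
    have um: "u \<in> borel_measurable P" by (rule mP[OF add.hyps(1)])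
    have vm: "v \<in> borel_measurable P" by (rule mP[OF add.hyps(3)])
    have "(\<integral>\<^sup>+\<xi>. indicator S \<xi> * (v \<xi> + u \<xi>) \<partial>P) = (\<integral>\<^sup>+\<xi>. indicator S \<xi> * v \<xi> + indicator S \<xi> * u \<xi> \<partial>P)"
      by (simp add: distrib_left)
    also have "\<dots> = (\<integral>\<^sup>+\<xi>. indicator S \<xi> * v \<xi> \<partial>P) + (\<integral>\<^sup>+\<xi>. indicator S \<xi> * u \<xi> \<partial>P)"
      by (rule nn_integral_add[OF mS[OF vm] mS[OF um]])
    also have "\<dots> = ennreal p * ((\<integral>\<^sup>+\<xi>. v \<xi> \<partial>P) + (\<integral>\<^sup>+\<xi>. u \<xi> \<partial>P))"
      unfolding add.IH by (simp add: distrib_left)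
    also have "(\<integral>\<^sup>+\<xi>. v \<xi> \<partial>P) + (\<integral>\<^sup>+\<xi>. u \<xi> \<partial>P) = (\<integral>\<^sup>+\<xi>. v \<xi> + u \<xi> \<partial>P)"
      by (rule nn_integral_add[OF vm um, symmetric])
    finally show ?case .
  next
    case (seq U)
    have Um: "U i \<in> borel_measurable P" for i by (rule mP[OF seq.hyps(1)])
    have "(\<integral>\<^sup>+\<xi>. indicator S \<xi> * (SUP i. U i) \<xi> \<partial>P) = (\<integral>\<^sup>+\<xi>. (SUP i. indicator S \<xi> * U i \<xi>) \<partial>P)"
      by (simp only: SUP_apply SUP_mult_left_ennreal)
    also have "\<dots> = (SUP i. \<integral>\<^sup>+\<xi>. indicator S \<xi> * U i \<xi> \<partial>P)"
    proof (rule nn_integral_monotone_convergence_SUP)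
      show "incseq (\<lambda>i \<xi>. indicator S \<xi> * U i \<xi>)"
      proof (intro monoI le_funI)
        fix i j :: nat and \<xi> assume ij: "i \<le> j"
        have "U i \<xi> \<le> U j \<xi>" using seq.hyps(3) ij unfolding incseq_def le_fun_def by blast
        then show "indicator S \<xi> * U i \<xi> \<le> indicator S \<xi> * U j \<xi>" by (rule mult_left_mono) simp
      qed
      show "(\<lambda>\<xi>. indicator S \<xi> * U i \<xi>) \<in> borel_measurable P" for i by (rule mS[OF Um])
    qed
    also have "\<dots> = (SUP i. ennreal p * \<integral>\<^sup>+\<xi>. U i \<xi> \<partial>P)" by (simp only: seq.IH)
    also have "\<dots> = ennreal p * (SUP i. \<integral>\<^sup>+\<xi>. U i \<xi> \<partial>P)"
      by (simp only: SUP_mult_left_ennreal)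
    also have "(SUP i. \<integral>\<^sup>+\<xi>. U i \<xi> \<partial>P) = (\<integral>\<^sup>+\<xi>. (SUP i. U i \<xi>) \<partial>P)"
      by (rule nn_integral_monotone_convergence_SUP[symmetric]) (use seq.hyps(3) Um in blast)+
    finally show ?case by (simp only: SUP_apply)
  qed
qed

lemma meas_comp_cont:
  fixes \<Phi> :: "'b::topological_space \<Rightarrow> 'c::topological_space"
  assumes "continuous_on S \<Phi>" "a \<in> borel_measurable M" "\<And>\<xi>. \<xi> \<in> space M \<Longrightarrow> a \<xi> \<in> S"
  shows "(\<lambda>\<xi>. \<Phi> (a \<xi>)) \<in> borel_measurable M"
proof -
  have "a \<in> measurable M (restrict_space borel S)"
    using assms by (intro measurable_restrict_space2) auto
  moreover have "\<Phi> \<in> borel_measurable (restrict_space borel S)"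
    using assms(1) by (rule borel_measurable_continuous_on_restrict)
  ultimately show ?thesis by (rule measurable_compose)
qed



lemma prox_lip:
  fixes h :: "'v::euclidean_space \<Rightarrow> ereal"
  assumes p1: "is_prox h \<eta> a1 u1" and p2: "is_prox h \<eta> a2 u2"
    and pr: "proper_fun h" and cv: "convex_fun h" and eta: "\<eta> > 0"
  shows "norm (u1 - u2) \<le> norm (a1 - a2)"
proof -
  have "0 \<le> ((1/\<eta>) *\<^sub>R (a1 - u1) - (1/\<eta>) *\<^sub>R (a2 - u2)) \<bullet> (u1 - u2)"
    by (rule subdiff_mono[OF pr prox_subgrad[OF p1 pr cv eta] prox_subgrad[OF p2 pr cv eta]])
  also have "\<dots> = (1/\<eta>) * (((a1 - a2) - (u1 - u2)) \<bullet> (u1 - u2))"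
    by (simp add: algebra_simps inner_diff_left)
  finally have "0 \<le> ((a1 - a2) - (u1 - u2)) \<bullet> (u1 - u2)"
    using eta by (simp add: zero_le_divide_iff)
  hence "(norm (u1 - u2))\<^sup>2 \<le> (a1 - a2) \<bullet> (u1 - u2)"
    by (simp add: inner_diff_left power2_norm_eq_inner)
  also have "\<dots> \<le> norm (a1 - a2) * norm (u1 - u2)" by (rule norm_cauchy_schwarz)
  finally have H: "norm (u1 - u2) * norm (u1 - u2) \<le> norm (a1 - a2) * norm (u1 - u2)"
    by (simp add: power2_eq_square)
  show ?thesis
  proof (cases "norm (u1 - u2) = 0")
    case True then show ?thesis by simp
  next
    case False
    hence "norm (u1 - u2) > 0" by simp
    with H show ?thesis by (simp add: mult_le_cancel_right)
  qed
qed



theorem theorem9: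
  fixes P :: "'a measure"
    and Fl :: "nat \<Rightarrow> 'a measure"
    and f :: "'v::euclidean_space \<Rightarrow> real" and gf :: "'v \<Rightarrow> 'v" and L :: real
    and m :: nat and g :: "nat \<Rightarrow> 'v \<Rightarrow> ereal" and R :: "'v \<Rightarrow> ereal"
    and p :: "nat \<Rightarrow> real" and \<eta> \<eta>0 \<omega> :: real and Mseq :: "nat \<Rightarrow> real"
    and xs :: 'v and ys :: "nat \<Rightarrow> 'v" and rs :: 'v
    and x0 :: 'v and y0 :: "nat \<Rightarrow> 'v"
    and x :: "nat \<Rightarrow> 'a \<Rightarrow> 'v" and v :: "nat \<Rightarrow> 'a \<Rightarrow> 'v" and z :: "nat \<Rightarrow> 'a \<Rightarrow> 'v"
    and y :: "nat \<Rightarrow> nat \<Rightarrow> 'a \<Rightarrow> 'v" and j :: "nat \<Rightarrow> 'a \<Rightarrow> nat"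
  assumes P: "prob_space P"
    (* problem data *)
    and f_grad: "\<And>u. (f has_derivative (\<lambda>h. gf u \<bullet> h)) (at u)"
    and f_convex: "convex_on UNIV f"
    and f_smooth: "\<And>u w. f u \<le> f w + gf w \<bullet> (u - w) + L / 2 * (norm (u - w))\<^sup>2"
    and m_pos: "m > 0"
    and g_pcc: "\<And>k. k < m \<Longrightarrow> proper_closed_convex (g k)"
    and R_pcc: "proper_closed_convex R"
    (* optimality assumption *)
    and xs_min: "\<And>u. objective f m g R xs \<le> objective f m g R u"
    and ys_sub: "\<And>k. k < m \<Longrightarrow> ys k \<in> subdiff (g k) xs"
    and rs_sub: "rs \<in> subdiff R xs"
    and opt: "gf xs + (1 / real m) *\<^sub>R (\<Sum>k<m. ys k) + rs = 0"
    (* parameters *)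
    and p_pos: "\<And>k. k < m \<Longrightarrow> p k > 0"
    and p_sum: "(\<Sum>k<m. p k) = 1"
    and eta_pos: "\<eta> > 0" and eta0_pos: "\<eta>0 > 0" and eta_le: "\<eta> \<le> \<eta>0"
    and omega_pos: "\<omega> > 0"
    (* Stochastic Decoupling Method, pathwise *)
    and x_init: "\<And>\<xi>. x 0 \<xi> = x0"
    and y_init: "\<And>k \<xi>. k < m \<Longrightarrow> y 0 k \<xi> = y0 k"
    and z_step: "\<And>t \<xi>. is_prox R \<eta>
        (x t \<xi> - \<eta> *\<^sub>R v t \<xi> - \<eta> *\<^sub>R ((1 / real m) *\<^sub>R (\<Sum>k<m. y t k \<xi>))) (z t \<xi>)"
    and j_range: "\<And>t \<xi>. j t \<xi> < m"
    and x_step: "\<And>t \<xi>. is_prox (g (j t \<xi>)) (\<eta> / (real m * p (j t \<xi>)))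
        (z t \<xi> + (\<eta> / (real m * p (j t \<xi>))) *\<^sub>R y t (j t \<xi>) \<xi>) (x (Suc t) \<xi>)"
    and y_step: "\<And>t k \<xi>. k < m \<Longrightarrow> y (Suc t) k \<xi> =
        (if k = j t \<xi> then y t k \<xi> + (1 / (\<eta> / (real m * p k))) *\<^sub>R (z t \<xi> - x (Suc t) \<xi>)
         else y t k \<xi>)"
    (* randomness: filtration of the past, j_t drawn independently of it with law p *)
    and Fl_sub: "\<And>t. subalgebra P (Fl t)"
    and Fl_mono: "\<And>t. sets (Fl t) \<subseteq> sets (Fl (Suc t))"
    and x_meas: "\<And>t. x t \<in> borel_measurable (Fl t)"
    and v_meas: "\<And>t. v t \<in> borel_measurable (Fl t)"
    and y_meas: "\<And>t k. k < m \<Longrightarrow> y t k \<in> borel_measurable (Fl t)"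
    and j_meas: "\<And>t. j t \<in> measurable (Fl (Suc t)) (count_space UNIV)"
    and j_indep: "\<And>t k A. A \<in> sets (Fl t) \<Longrightarrow>
        measure P ({\<xi> \<in> space P. j t \<xi> = k} \<inter> A) = p k * measure P A"
    (* gradient-estimator condition, part (a), at the chosen stepsize *)
    and M_nonneg: "\<And>t. Mseq t \<ge> 0"
    and int_x: "\<And>t. integrable P (\<lambda>\<xi>. (norm (x t \<xi> - xs))\<^sup>2)"
    and int_w: "\<And>t. integrable P (\<lambda>\<xi>. (norm ((x t \<xi> - \<eta> *\<^sub>R v t \<xi>) - (xs - \<eta> *\<^sub>R gf xs)))\<^sup>2)"
    and int_D: "\<And>t. integrable P (\<lambda>\<xi>. bregman f gf (x t \<xi>) xs)"
    and est_a: "\<And>t. (\<integral>\<xi>. (norm ((x t \<xi> - \<eta> *\<^sub>R v t \<xi>) - (xs - \<eta> *\<^sub>R gf xs)))\<^sup>2 \<partial>P) + Mseq (Suc t)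
        \<le> (\<integral>\<xi>. (norm (x t \<xi> - xs))\<^sup>2 \<partial>P) - \<omega> * \<eta> * (\<integral>\<xi>. bregman f gf (x t \<xi>) xs \<partial>P) + Mseq t"
  shows "AE \<xi> in P. (\<lambda>t. bregman f gf (x t \<xi>) xs) \<longlonglongrightarrow> 0"
proof -
  interpret prob_space P by (rule P)
  define et where "et k = \<eta> / (real m * p k)" for k
  define Lt where "Lt t \<xi> = (\<Sum>k<m. (et k)\<^sup>2 * (norm (y t k \<xi> - ys k))\<^sup>2)" for t \<xi>
  define X where "X t \<xi> = (norm (x t \<xi> - xs))\<^sup>2" for t \<xi>
  define W where "W t \<xi> = (norm ((x t \<xi> - \<eta> *\<^sub>R v t \<xi>) - (xs - \<eta> *\<^sub>R gf xs)))\<^sup>2" for t \<xi>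
  define D where "D t \<xi> = bregman f gf (x t \<xi>) xs" for t \<xi>
  define B where "B t k \<xi> = (norm (z t \<xi> - xs + et k *\<^sub>R (y t k \<xi> - ys k)))\<^sup>2
      + (Lt t \<xi> - (et k)\<^sup>2 * (norm (y t k \<xi> - ys k))\<^sup>2)" for t k \<xi>
  define Q where "Q t \<xi> = X t \<xi> + Lt t \<xi>" for t \<xi>
  define az where "az t \<xi> = x t \<xi> - \<eta> *\<^sub>R v t \<xi> - \<eta> *\<^sub>R ((1 / real m) *\<^sub>R (\<Sum>k<m. y t k \<xi>))" for t \<xi>
  have et_pos: "et k > 0" if "k < m" for k
    using p_pos[OF that] eta_pos m_pos by (simp add: et_def)
  have pet: "p k * et k = \<eta> / real m" if "k < m" for k
    using p_pos[OF that] by (simp add: et_def)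
  have R_pr: "proper_fun R" and R_cv: "convex_fun R"
    using R_pcc by (auto simp: proper_closed_convex_def)
  have g_pr: "proper_fun (g k)" and g_cv: "convex_fun (g k)" if "k < m" for k
    using g_pcc[OF that] by (auto simp: proper_closed_convex_def)
  have D_nn: "0 \<le> D t \<xi>" for t \<xi>
    unfolding D_def by (rule bregman_nonneg[OF f_grad f_convex])
  have Lt_nn: "0 \<le> Lt t \<xi>" for t \<xi>
    unfolding Lt_def by (intro sum_nonneg) auto
  have Lt_ge: "(et k)\<^sup>2 * (norm (y t k \<xi> - ys k))\<^sup>2 \<le> Lt t \<xi>" if "k < m" for t k \<xi>
    unfolding Lt_def by (rule member_le_sum[where f = "\<lambda>k. (et k)\<^sup>2 * (norm (y t k \<xi> - ys k))\<^sup>2"]) (use that in auto)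
  have B_nn: "0 \<le> B t k \<xi>" if "k < m" for t k \<xi>
    using Lt_ge[OF that, of t \<xi>] unfolding B_def by simp

  have F1: "Q (Suc t) \<xi> \<le> B t (j t \<xi>) \<xi>" for t \<xi>
  proof -
    define k where "k = j t \<xi>"
    have k: "k < m" using j_range[of t \<xi>] by (simp add: k_def)
    have etk: "et k > 0" by (rule et_pos[OF k])
    define u where "u = x (Suc t) \<xi>"
    define a where "a = z t \<xi> + et k *\<^sub>R y t k \<xi>"
    have xp: "is_prox (g k) (et k) a u"
      using x_step[of t \<xi>] unfolding k_def[symmetric] et_def[symmetric] a_def u_def .
    have yk: "y (Suc t) k \<xi> = (1 / et k) *\<^sub>R (a - u)"
    proof -
      have "y (Suc t) k \<xi> = y t k \<xi> + (1 / et k) *\<^sub>R (z t \<xi> - u)"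
        using y_step[OF k, of t \<xi>] unfolding k_def[symmetric] et_def[symmetric] u_def by simp
      also have "\<dots> = (1 / et k) *\<^sub>R (a - u)"
        using etk unfolding a_def by (simp add: algebra_simps)
      finally show ?thesis .
    qed
    have sg: "y (Suc t) k \<xi> \<in> subdiff (g k) u"
      unfolding yk by (rule prox_subgrad[OF xp g_pr[OF k] g_cv[OF k] etk])
    have mono: "0 \<le> (y (Suc t) k \<xi> - ys k) \<bullet> (u - xs)"
      by (rule subdiff_mono[OF g_pr[OF k] sg ys_sub[OF k]])
    define A where "A = z t \<xi> - xs + et k *\<^sub>R (y t k \<xi> - ys k)"
    define b where "b = et k *\<^sub>R (y (Suc t) k \<xi> - ys k)"
    have bb: "et k *\<^sub>R y (Suc t) k \<xi> = a - u" unfolding yk using etk by simp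
    have Ab: "A - b = u - xs"
      unfolding A_def b_def scaleR_diff_right bb unfolding a_def by (simp add: algebra_simps)
    have "0 \<le> b \<bullet> (A - b)" unfolding Ab unfolding b_def using mono etk by simp
    from vec_ineq1[OF this]
    have main: "(norm (u - xs))\<^sup>2 + (et k)\<^sup>2 * (norm (y (Suc t) k \<xi> - ys k))\<^sup>2 \<le> (norm A)\<^sup>2"
      unfolding Ab unfolding b_def using etk by (simp add: power_mult_distrib)
    define F where "F s i = (et i)\<^sup>2 * (norm (y s i \<xi> - ys i))\<^sup>2" for s i
    have split: "Lt s \<xi> = F s k + (\<Sum>i\<in>{..<m} - {k}. F s i)" for s
      unfolding Lt_def F_def by (rule sum.remove) (use k in auto)
    have rest: "(\<Sum>i\<in>{..<m} - {k}. F (Suc t) i) = (\<Sum>i\<in>{..<m} - {k}. F t i)"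
    proof (rule sum.cong[OF refl])
      fix i assume "i \<in> {..<m} - {k}"
      hence "i < m" "i \<noteq> j t \<xi>" by (auto simp: k_def)
      then show "F (Suc t) i = F t i" unfolding F_def using y_step[of i t \<xi>] by simp
    qed
    have "Q (Suc t) \<xi> = (norm (u - xs))\<^sup>2 + F (Suc t) k + (\<Sum>i\<in>{..<m} - {k}. F t i)"
      unfolding Q_def X_def split[of "Suc t"] rest u_def by simp
    also have "\<dots> \<le> (norm A)\<^sup>2 + (\<Sum>i\<in>{..<m} - {k}. F t i)"
      using main unfolding F_def by simp
    also have "\<dots> = B t k \<xi>"
      unfolding B_def A_def split[of t] F_def by simp
    finally show ?thesis unfolding k_def .
  qed
  have F2: "(\<Sum>k<m. p k * B t k \<xi>) \<le> W t \<xi> + Lt t \<xi>" for t \<xi>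
  proof -
    define d where "d = z t \<xi> - xs"
    define e where "e k = y t k \<xi> - ys k" for k
    define q where "q = (1 / real m) *\<^sub>R (\<Sum>k<m. e k)"
    define E where "E = (x t \<xi> - \<eta> *\<^sub>R v t \<xi>) - (xs - \<eta> *\<^sub>R gf xs)"
    have Bk: "B t k \<xi> = (norm d)\<^sup>2 + 2 * et k * (d \<bullet> e k) + Lt t \<xi>" for k
    proof -
      have "(norm (d + et k *\<^sub>R e k))\<^sup>2 = (norm d)\<^sup>2 + 2 * et k * (d \<bullet> e k) + (et k)\<^sup>2 * (norm (e k))\<^sup>2"
        unfolding power2_norm_eq_inner
        by (simp add: inner_add_left inner_add_right inner_commute power2_eq_square algebra_simps)
      then show ?thesis unfolding B_def d_def e_def by (simp add: algebra_simps)
    qed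
    have "(\<Sum>k<m. p k * B t k \<xi>) = (\<Sum>k<m. p k * ((norm d)\<^sup>2 + Lt t \<xi>) + 2 * (\<eta> / real m) * (d \<bullet> e k))"
    proof (rule sum.cong[OF refl])
      fix k assume "k \<in> {..<m}"
      hence k: "k < m" by simp
      have "p k * B t k \<xi> = p k * ((norm d)\<^sup>2 + Lt t \<xi>) + 2 * (p k * et k) * (d \<bullet> e k)"
        unfolding Bk by (simp add: algebra_simps)
      then show "p k * B t k \<xi> = p k * ((norm d)\<^sup>2 + Lt t \<xi>) + 2 * (\<eta> / real m) * (d \<bullet> e k)"
        unfolding pet[OF k] .
    qed
    also have "\<dots> = (\<Sum>k<m. p k) * ((norm d)\<^sup>2 + Lt t \<xi>) + 2 * (\<eta> / real m) * (\<Sum>k<m. d \<bullet> e k)"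
      by (simp add: sum.distrib sum_distrib_left sum_distrib_right)
    also have "\<dots> = (norm d)\<^sup>2 + 2 * (d \<bullet> (\<eta> *\<^sub>R q)) + Lt t \<xi>"
      unfolding p_sum q_def by (simp add: inner_sum_right)
    also have "\<dots> \<le> W t \<xi> + Lt t \<xi>"
    proof -
      have sg: "(1 / \<eta>) *\<^sub>R (az t \<xi> - z t \<xi>) \<in> subdiff R (z t \<xi>)"
        by (rule prox_subgrad[OF _ R_pr R_cv eta_pos]) (use z_step[of t \<xi>] in \<open>simp add: az_def\<close>)
      have mono: "0 \<le> ((1 / \<eta>) *\<^sub>R (az t \<xi> - z t \<xi>) - rs) \<bullet> (z t \<xi> - xs)"
        by (rule subdiff_mono[OF R_pr sg rs_sub])
      have rs_eq: "rs = - gf xs - (1 / real m) *\<^sub>R (\<Sum>k<m. ys k)"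
        using opt by (simp add: algebra_simps eq_neg_iff_add_eq_0)
      have sumq: "(\<Sum>k<m. e k) = (\<Sum>k<m. y t k \<xi>) - (\<Sum>k<m. ys k)"
        unfolding e_def by (simp add: sum_subtractf)
      have eqv: "\<eta> *\<^sub>R ((1 / \<eta>) *\<^sub>R (az t \<xi> - z t \<xi>) - rs) = E - \<eta> *\<^sub>R q - d"
        using eta_pos unfolding rs_eq E_def q_def d_def az_def sumq
        by (simp add: algebra_simps)
      have "0 \<le> (E - \<eta> *\<^sub>R q - d) \<bullet> d"
        unfolding eqv[symmetric] using mono eta_pos by (simp add: d_def)
      from vec_ineq2[OF this]
      show ?thesis unfolding W_def E_def by simp
    qed
    finally show ?thesis .
  qed
  have ysum_meas: "(\<lambda>\<xi>. \<Sum>k<m. y t k \<xi>) \<in> borel_measurable (Fl t)" for t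
    by (rule borel_measurable_sum) (simp add: y_meas)
  have az_meas: "az t \<in> borel_measurable (Fl t)" for t
  proof -
    note [measurable] = x_meas[of t] v_meas[of t] ysum_meas[of t]
    show ?thesis unfolding az_def by measurable
  qed
  have z_meas: "z t \<in> borel_measurable (Fl t)" for t
  proof -
    define \<Phi> where "\<Phi> a = (SOME u. is_prox R \<eta> a u)" for a
    define Sx where "Sx = {a. \<exists>u. is_prox R \<eta> a u}"
    have \<Phi>p: "is_prox R \<eta> a (\<Phi> a)" if "a \<in> Sx" for a
      using that unfolding Sx_def \<Phi>_def by (auto intro: someI_ex)
    have "1-lipschitz_on Sx \<Phi>"
    proof (rule lipschitz_onI)
      fix a b assume "a \<in> Sx" "b \<in> Sx"
      then show "dist (\<Phi> a) (\<Phi> b) \<le> 1 * dist a b"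
        using prox_lip[OF \<Phi>p \<Phi>p R_pr R_cv eta_pos] by (simp add: dist_norm)
    qed simp
    hence cont: "continuous_on Sx \<Phi>" by (rule lipschitz_on_continuous_on)
    have zp: "is_prox R \<eta> (az t \<xi>) (z t \<xi>)" for \<xi>
      using z_step[of t \<xi>] unfolding az_def .
    hence inS: "az t \<xi> \<in> Sx" for \<xi> unfolding Sx_def by blast
    have "z t \<xi> = \<Phi> (az t \<xi>)" for \<xi>
      using prox_lip[OF zp[of \<xi>] \<Phi>p[OF inS[of \<xi>]] R_pr R_cv eta_pos] by simp
    hence "z t = (\<lambda>\<xi>. \<Phi> (az t \<xi>))" by (rule ext)
    moreover have "(\<lambda>\<xi>. \<Phi> (az t \<xi>)) \<in> borel_measurable (Fl t)"
      by (rule meas_comp_cont[OF cont az_meas inS])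
    ultimately show ?thesis by simp
  qed
  have Lt_meas: "(\<lambda>\<xi>. Lt t \<xi>) \<in> borel_measurable (Fl t)" for t
    unfolding Lt_def
  proof (rule borel_measurable_sum)
    fix k assume "k \<in> {..<m}"
    hence [measurable]: "y t k \<in> borel_measurable (Fl t)" using y_meas by simp
    show "(\<lambda>\<xi>. (et k)\<^sup>2 * (norm (y t k \<xi> - ys k))\<^sup>2) \<in> borel_measurable (Fl t)" by measurable
  qed
  have B_meas: "(\<lambda>\<xi>. B t k \<xi>) \<in> borel_measurable (Fl t)" if "k < m" for t k
  proof -
    note [measurable] = z_meas[of t] y_meas[OF that, of t] Lt_meas[of t]
    show ?thesis unfolding B_def by measurable
  qed
  have X_meas: "(\<lambda>\<xi>. X t \<xi>) \<in> borel_measurable (Fl t)" for t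
  proof -
    note [measurable] = x_meas[of t]
    show ?thesis unfolding X_def by measurable
  qed
  have W_meas: "(\<lambda>\<xi>. W t \<xi>) \<in> borel_measurable (Fl t)" for t
  proof -
    note [measurable] = x_meas[of t] v_meas[of t]
    show ?thesis unfolding W_def by measurable
  qed
  have toP: "u \<in> borel_measurable P" if "u \<in> borel_measurable (Fl t)" for u :: "'a \<Rightarrow> real" and t
    using measurable_from_subalg[OF Fl_sub that] .
  have D_meas: "(\<lambda>\<xi>. D t \<xi>) \<in> borel_measurable P" for t
    using int_D[of t] unfolding D_def by auto
  have EM: "(\<lambda>\<xi>. ennreal (h \<xi>)) \<in> borel_measurable P" if "h \<in> borel_measurable P" for h :: "'a \<Rightarrow> real"
    by (rule measurable_compose[OF that measurable_ennreal])
  have XP: "(\<lambda>\<xi>. X t \<xi>) \<in> borel_measurable P" for t by (rule toP[OF X_meas])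
  have WP: "(\<lambda>\<xi>. W t \<xi>) \<in> borel_measurable P" for t by (rule toP[OF W_meas])
  have LtP: "(\<lambda>\<xi>. Lt t \<xi>) \<in> borel_measurable P" for t by (rule toP[OF Lt_meas])
  have BP: "(\<lambda>\<xi>. B t k \<xi>) \<in> borel_measurable P" if "k < m" for t k by (rule toP[OF B_meas[OF that]])
  have intX: "integrable P (X t)" for t using int_x[of t] unfolding X_def .
  have intW: "integrable P (W t)" for t using int_w[of t] unfolding W_def .
  have intD: "integrable P (D t)" for t using int_D[of t] unfolding D_def .
  have nnX: "(\<integral>\<^sup>+\<xi>. ennreal (X t \<xi>) \<partial>P) = ennreal (\<integral>\<xi>. X t \<xi> \<partial>P)" for t
    by (rule nn_integral_eq_integral[OF intX]) (simp add: X_def)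
  have nnW: "(\<integral>\<^sup>+\<xi>. ennreal (W t \<xi>) \<partial>P) = ennreal (\<integral>\<xi>. W t \<xi> \<partial>P)" for t
    by (rule nn_integral_eq_integral[OF intW]) (simp add: W_def)
  define IQ where "IQ t = (\<integral>\<^sup>+\<xi>. ennreal (Q t \<xi>) \<partial>P)" for t
  define IL where "IL t = (\<integral>\<^sup>+\<xi>. ennreal (Lt t \<xi>) \<partial>P)" for t
  have stepQ: "IQ (Suc t) \<le> ennreal (\<integral>\<xi>. W t \<xi> \<partial>P) + IL t" for t
  proof -
    define S where "S k = {\<xi> \<in> space P. j t \<xi> = k}" for k
    have spF: "space (Fl s) = space P" and setsF: "sets (Fl s) \<subseteq> sets P" for s
      using Fl_sub[of s] by (auto simp: subalgebra_def)
    have SP: "S k \<in> sets P" for k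
    proof -
      have "j t -` {k} \<inter> space (Fl (Suc t)) \<in> sets (Fl (Suc t))"
        by (rule measurable_sets[OF j_meas]) simp
      moreover have "j t -` {k} \<inter> space (Fl (Suc t)) = S k" by (auto simp: S_def spF)
      ultimately show ?thesis using setsF by auto
    qed
    have IB: "(\<lambda>\<xi>. indicator (S k) \<xi> * ennreal (B t k \<xi>)) \<in> borel_measurable P" if "k < m" for k
      by (rule borel_measurable_times_ennreal[OF borel_measurable_indicator[OF SP] EM[OF BP[OF that]]])
    have "IQ (Suc t) \<le> (\<integral>\<^sup>+\<xi>. (\<Sum>k<m. indicator (S k) \<xi> * ennreal (B t k \<xi>)) \<partial>P)"
      unfolding IQ_def
    proof (rule nn_integral_mono)
      fix \<xi> assume \<xi>: "\<xi> \<in> space P"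
      have "(\<Sum>k<m. indicator (S k) \<xi> * ennreal (B t k \<xi>)) = (\<Sum>k<m. if k = j t \<xi> then ennreal (B t k \<xi>) else 0)"
        by (rule sum.cong) (auto simp: S_def indicator_def \<xi>)
      also have "\<dots> = ennreal (B t (j t \<xi>) \<xi>)" using j_range[of t \<xi>] by (simp add: sum.delta)
      finally show "ennreal (Q (Suc t) \<xi>) \<le> (\<Sum>k<m. indicator (S k) \<xi> * ennreal (B t k \<xi>))"
        using F1[of t \<xi>] by (simp add: ennreal_leI)
    qed
    also have "\<dots> = (\<Sum>k<m. \<integral>\<^sup>+\<xi>. indicator (S k) \<xi> * ennreal (B t k \<xi>) \<partial>P)"
      by (rule nn_integral_sum) (use IB in auto)
    also have "\<dots> = (\<Sum>k<m. ennreal (p k) * \<integral>\<^sup>+\<xi>. ennreal (B t k \<xi>) \<partial>P)"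
    proof (rule sum.cong)
      fix k assume "k \<in> {..<m}"
      hence k: "k < m" by simp
      show "(\<integral>\<^sup>+\<xi>. indicator (S k) \<xi> * ennreal (B t k \<xi>) \<partial>P) = ennreal (p k) * \<integral>\<^sup>+\<xi>. ennreal (B t k \<xi>) \<partial>P"
      proof (rule indep_nn[OF P Fl_sub[of t] SP])
        show "measure P (S k \<inter> A) = p k * measure P A" if "A \<in> sets (Fl t)" for A
          using j_indep[OF that, of k] by (simp add: S_def)
        show "0 \<le> p k" using p_pos[OF k] by simp
        show "(\<lambda>\<xi>. ennreal (B t k \<xi>)) \<in> borel_measurable (Fl t)"
          by (rule measurable_compose[OF B_meas[OF k] measurable_ennreal])
      qed
    qed simp
    also have "\<dots> = (\<integral>\<^sup>+\<xi>. (\<Sum>k<m. ennreal (p k) * ennreal (B t k \<xi>)) \<partial>P)"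
    proof -
      have "(\<integral>\<^sup>+\<xi>. (\<Sum>k<m. ennreal (p k) * ennreal (B t k \<xi>)) \<partial>P)
          = (\<Sum>k<m. \<integral>\<^sup>+\<xi>. ennreal (p k) * ennreal (B t k \<xi>) \<partial>P)"
        by (rule nn_integral_sum) (rule borel_measurable_times_ennreal[OF borel_measurable_const EM[OF BP]], simp)
      also have "\<dots> = (\<Sum>k<m. ennreal (p k) * \<integral>\<^sup>+\<xi>. ennreal (B t k \<xi>) \<partial>P)"
        by (rule sum.cong[OF refl]) (rule nn_integral_cmult[OF EM[OF BP]], simp)
      finally show ?thesis by simp
    qed
    also have "\<dots> \<le> (\<integral>\<^sup>+\<xi>. ennreal (W t \<xi>) + ennreal (Lt t \<xi>) \<partial>P)"
    proof (rule nn_integral_mono)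
      fix \<xi>
      have "(\<Sum>k<m. ennreal (p k) * ennreal (B t k \<xi>)) = (\<Sum>k<m. ennreal (p k * B t k \<xi>))"
        by (rule sum.cong) (use p_pos B_nn in \<open>auto simp: ennreal_mult less_imp_le\<close>)
      also have "\<dots> = ennreal (\<Sum>k<m. p k * B t k \<xi>)"
        by (rule sum_ennreal) (simp add: B_nn p_pos less_imp_le)
      also have "\<dots> \<le> ennreal (W t \<xi> + Lt t \<xi>)" by (rule ennreal_leI[OF F2])
      also have "\<dots> = ennreal (W t \<xi>) + ennreal (Lt t \<xi>)" by (simp add: W_def Lt_nn ennreal_plus)
      finally show "(\<Sum>k<m. ennreal (p k) * ennreal (B t k \<xi>)) \<le> ennreal (W t \<xi>) + ennreal (Lt t \<xi>)" .
    qed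
    also have "\<dots> = ennreal (\<integral>\<xi>. W t \<xi> \<partial>P) + IL t"
      unfolding IL_def nnW[symmetric] by (rule nn_integral_add[OF EM[OF WP] EM[OF LtP]])
    finally show ?thesis .
  qed
  have IQ_eq: "IQ t = ennreal (\<integral>\<xi>. X t \<xi> \<partial>P) + IL t" for t
  proof -
    have "IQ t = (\<integral>\<^sup>+\<xi>. ennreal (X t \<xi>) + ennreal (Lt t \<xi>) \<partial>P)"
      unfolding IQ_def Q_def by (rule nn_integral_cong) (simp add: X_def Lt_nn ennreal_plus)
    also have "\<dots> = (\<integral>\<^sup>+\<xi>. ennreal (X t \<xi>) \<partial>P) + IL t"
      unfolding IL_def by (rule nn_integral_add[OF EM[OF XP] EM[OF LtP]])
    finally show ?thesis unfolding nnX .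
  qed
  define Psi where "Psi t = IQ t + ennreal (Mseq t)" for t
  define ED where "ED t = ennreal (\<integral>\<xi>. D t \<xi> \<partial>P)" for t
  define c where "c = ennreal (\<omega> * \<eta>)"
  have descent: "Psi (Suc t) + c * ED t \<le> Psi t" for t
  proof -
    have i1: "0 \<le> (\<integral>\<xi>. W t \<xi> \<partial>P)" by (rule integral_nonneg_AE) (simp add: W_def)
    have i2: "0 \<le> (\<integral>\<xi>. D t \<xi> \<partial>P)" by (rule integral_nonneg_AE) (simp add: D_nn)
    have i3: "0 \<le> \<omega> * \<eta>" using omega_pos eta_pos by simp
    have est: "(\<integral>\<xi>. W t \<xi> \<partial>P) + Mseq (Suc t) + \<omega> * \<eta> * (\<integral>\<xi>. D t \<xi> \<partial>P)
        \<le> (\<integral>\<xi>. X t \<xi> \<partial>P) + Mseq t"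
      using est_a[of t] unfolding W_def X_def D_def by simp
    have "Psi (Suc t) + c * ED t = IQ (Suc t) + ennreal (Mseq (Suc t)) + c * ED t"
      by (simp add: Psi_def)
    also have "\<dots> \<le> (ennreal (\<integral>\<xi>. W t \<xi> \<partial>P) + IL t) + ennreal (Mseq (Suc t)) + c * ED t"
      using stepQ[of t] by (intro add_right_mono)
    also have "\<dots> = ennreal ((\<integral>\<xi>. W t \<xi> \<partial>P) + Mseq (Suc t) + \<omega> * \<eta> * (\<integral>\<xi>. D t \<xi> \<partial>P)) + IL t"
    proof -
      have "ennreal ((\<integral>\<xi>. W t \<xi> \<partial>P) + Mseq (Suc t) + \<omega> * \<eta> * (\<integral>\<xi>. D t \<xi> \<partial>P))
          = ennreal ((\<integral>\<xi>. W t \<xi> \<partial>P) + Mseq (Suc t)) + ennreal (\<omega> * \<eta> * (\<integral>\<xi>. D t \<xi> \<partial>P))"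
        by (rule ennreal_plus) (use i1 i2 i3 M_nonneg[of "Suc t"] in simp_all)
      also have "\<dots> = ennreal (\<integral>\<xi>. W t \<xi> \<partial>P) + ennreal (Mseq (Suc t)) + c * ED t"
        unfolding c_def ED_def using i1 i2 i3 M_nonneg[of "Suc t"] by (simp add: ennreal_plus ennreal_mult)
      finally have e: "ennreal ((\<integral>\<xi>. W t \<xi> \<partial>P) + Mseq (Suc t) + \<omega> * \<eta> * (\<integral>\<xi>. D t \<xi> \<partial>P))
          = ennreal (\<integral>\<xi>. W t \<xi> \<partial>P) + ennreal (Mseq (Suc t)) + c * ED t" .
      show ?thesis unfolding e by (simp add: ac_simps)
    qed
    also have "\<dots> \<le> ennreal ((\<integral>\<xi>. X t \<xi> \<partial>P) + Mseq t) + IL t"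
      using est by (intro add_right_mono ennreal_leI)
    also have "\<dots> = Psi t"
      using M_nonneg[of t] by (simp add: Psi_def IQ_eq ennreal_plus integral_nonneg X_def ac_simps)
    finally show ?thesis .
  qed
  have tele: "Psi n + c * (\<Sum>t<n. ED t) \<le> Psi 0" for n
  proof (induction n)
    case 0 then show ?case by simp
  next
    case (Suc n)
    have "Psi (Suc n) + c * (\<Sum>t<Suc n. ED t) = (Psi (Suc n) + c * ED n) + c * (\<Sum>t<n. ED t)"
      by (simp add: distrib_left ac_simps)
    also have "\<dots> \<le> Psi n + c * (\<Sum>t<n. ED t)"
      using descent[of n] by (rule add_right_mono)
    finally show ?case using Suc by simp
  qed
  have Psi0: "Psi 0 < \<infinity>"
  proof -
    define q0 where "q0 = (norm (x0 - xs))\<^sup>2 + (\<Sum>k<m. (et k)\<^sup>2 * (norm (y0 k - ys k))\<^sup>2)"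
    have "Q 0 \<xi> = q0" for \<xi>
      unfolding Q_def X_def Lt_def q0_def using y_init by (simp add: x_init)
    hence "IQ 0 = ennreal q0" by (simp add: IQ_def emeasure_space_1)
    thus ?thesis by (simp add: Psi_def)
  qed
  have ED_eq: "ED t = (\<integral>\<^sup>+\<xi>. ennreal (D t \<xi>) \<partial>P)" for t
    unfolding ED_def D_def
    by (rule nn_integral_eq_integral[symmetric]) (use int_D D_nn[unfolded D_def] in auto)
  have "c * (\<Sum>t. ED t) \<le> Psi 0"
  proof -
    have "(\<Sum>t. c * ED t) \<le> Psi 0"
    proof (rule suminf_le_const)
      show "summable (\<lambda>t. c * ED t)" by (rule summableI)
      show "(\<Sum>t<n. c * ED t) \<le> Psi 0" for n
        using tele[of n] by (simp add: sum_distrib_left[symmetric]) (meson add_increasing order_trans zero_le order_refl)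
    qed
    then show ?thesis by simp
  qed
  hence "c * (\<Sum>t. ED t) \<noteq> \<infinity>" using Psi0 by (auto simp: top_unique)
  moreover have "c \<noteq> 0" using omega_pos eta_pos by (simp add: c_def)
  ultimately have fin: "(\<Sum>t. ED t) \<noteq> \<infinity>" by (auto simp: ennreal_mult_eq_top_iff)
  have "(\<integral>\<^sup>+\<xi>. (\<Sum>t. ennreal (D t \<xi>)) \<partial>P) = (\<Sum>t. ED t)"
    unfolding ED_eq using D_meas by (intro nn_integral_suminf) auto
  with fin have "AE \<xi> in P. (\<Sum>t. ennreal (D t \<xi>)) \<noteq> \<infinity>"
    using D_meas by (intro nn_integral_PInf_AE) auto
  then show ?thesis
  proof (rule eventually_mono)
    fix \<xi> assume "(\<Sum>t. ennreal (D t \<xi>)) \<noteq> \<infinity>"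
    hence "summable (\<lambda>t. D t \<xi>)" using D_nn by (intro summable_suminf_not_top) auto
    then show "(\<lambda>t. bregman f gf (x t \<xi>) xs) \<longlonglongrightarrow> 0"
      using summable_LIMSEQ_zero unfolding D_def by blast
  qed
qed

end
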